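(* Let $d,n\ge 2$, $0<\varepsilon<1/4$, and let $f$ be a stable update function. There exists $K>0$ such that for every configuration $\mathcal U^{(0)}$ of $n$ opinions in $\mathbb S^{d-1}$ that is $\varepsilon$-active, there exists a sequence of at most $K$ interventions after which the resulting configuration is $\varepsilon$-inactive.
   Context: Opinions are unit vectors in $\mathbb R^d$; a configuration is an $n$-tuple $(\vec u_1,\dots,\vec u_n)$ and $A_{ij}=\langle\vec u_i,\vec u_j\rangle$. An intervention $(i,j)$, $i\ne j$, replaces $\vec u_i$ by $\vec w/\|\vec w\|$ with $\vec w=\vec u_i+f(A_{ij})\vec u_j$, leaving others unchanged. $f:[-1,1]\to\mathbb R$ is stable if continuous and $\operatorname{sign}f(A)=\operatorname{sign}A$ for all $A$. For $0\le\varepsilon<1$, a configuration is $\varepsilon$-active if there exist $i,j$ with $\varepsilon<|A_{ij}|<1-\varepsilon$, and $\varepsilon$-inactive otherwise. *)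

theory Defs
  imports "HOL-Analysis.Analysis"
begin

text \<open>Opinions are unit vectors in R^d, modelled as real^'d; agents are indexed
  by a finite type 'n (so n = CARD('n)). A configuration is a map 'n => real^'d.\<close>

definition is_config :: "('n \<Rightarrow> real ^ 'd::finite) \<Rightarrow> bool" where
  "is_config U \<longleftrightarrow> (\<forall>i. norm (U i) = 1)"

definition stable :: "(real \<Rightarrow> real) \<Rightarrow> bool" where
  "stable f \<longleftrightarrow> continuous_on {-1..1} f \<and> (\<forall>A\<in>{-1..1}. sgn (f A) = sgn A)"

definition intervene :: "(real \<Rightarrow> real) \<Rightarrow> 'n \<times> 'n \<Rightarrow> ('n \<Rightarrow> real ^ 'd::finite) \<Rightarrow> ('n \<Rightarrow> real ^ 'd::finite)" where
  "intervene f p U =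
     (let i = fst p; j = snd p; w = U i + f (U i \<bullet> U j) *\<^sub>R U j
      in U(i := (1 / norm w) *\<^sub>R w))"

definition apply_interventions ::
  "(real \<Rightarrow> real) \<Rightarrow> ('n \<times> 'n) list \<Rightarrow> ('n \<Rightarrow> real ^ 'd::finite) \<Rightarrow> ('n \<Rightarrow> real ^ 'd::finite)" where
  "apply_interventions f ps U = foldl (\<lambda>V p. intervene f p V) U ps"

definition eps_active :: "real \<Rightarrow> ('n \<Rightarrow> real ^ 'd::finite) \<Rightarrow> bool" where
  "eps_active \<epsilon> U \<longleftrightarrow> (\<exists>i j. \<epsilon> < \<bar>U i \<bullet> U j\<bar> \<and> \<bar>U i \<bullet> U j\<bar> < 1 - \<epsilon>)"

end

theory Submission
  imports Defs
begin

definition pull :: "(real \<Rightarrow> real) \<Rightarrow> real ^ 'd::finite \<Rightarrow> real ^ 'd \<Rightarrow> real ^ 'd" where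
  "pull f u v = (let w = u + f (u \<bullet> v) *\<^sub>R v in (1 / norm w) *\<^sub>R w)"

lemma intervene_eq: "intervene f (i, j) U = U(i := pull f (U i) (U j))"
  by (simp add: intervene_def pull_def Let_def)

lemma unit_inner_self: "norm (u::real^'d::finite) = 1 \<Longrightarrow> u \<bullet> u = 1"
  by (metis norm_eq_sqrt_inner real_sqrt_eq_1_iff)

lemma unit_inner_abs: "norm (u::real^'d::finite) = 1 \<Longrightarrow> norm v = 1 \<Longrightarrow> \<bar>u \<bullet> v\<bar> \<le> 1"
  using Cauchy_Schwarz_ineq2[of u v] by simp

lemma norm_w_sq:
  fixes u v :: "real^'d::finite"
  assumes "norm u = 1" "norm v = 1"
  shows "(norm (u + F *\<^sub>R v))^2 = 1 + 2*(u \<bullet> v)*F + F^2"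
proof -
  have "(norm (u + F *\<^sub>R v))^2 = (u + F *\<^sub>R v) \<bullet> (u + F *\<^sub>R v)"
    by (simp add: power2_norm_eq_inner)
  also have "\<dots> = u \<bullet> u + 2*F*(u \<bullet> v) + F^2 * (v \<bullet> v)"
    by (simp add: inner_add_left inner_add_right inner_commute algebra_simps power2_eq_square)
  finally show ?thesis using unit_inner_self[OF assms(1)] unit_inner_self[OF assms(2)]
    by (simp add: algebra_simps)
qed

lemma close_vec:
  fixes u a v :: "real^'d::finite"
  assumes "norm u = 1" "norm a = 1" "norm v = 1" "\<bar>u \<bullet> a\<bar> \<ge> 1 - \<delta>" "2*\<delta> \<le> e^2" "0 \<le> e"
  shows "\<exists>s. (s = 1 \<or> s = -1) \<and> norm (u - s *\<^sub>R a) \<le> e"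
proof -
  define s :: real where "s = (if u \<bullet> a \<ge> 0 then 1 else -1)"
  have sa: "s * (u \<bullet> a) = \<bar>u \<bullet> a\<bar>" "s^2 = 1" by (auto simp: s_def)
  have "(norm (u - s *\<^sub>R a))^2 = u \<bullet> u - 2 * (s * (u \<bullet> a)) + s^2 * (a \<bullet> a)"
    unfolding power2_norm_eq_inner by (simp add: inner_diff_left inner_diff_right inner_commute algebra_simps power2_eq_square)
  also have "\<dots> = 2 - 2 * \<bar>u \<bullet> a\<bar>" using sa unit_inner_self[OF assms(1)] unit_inner_self[OF assms(2)] by simp
  also have "\<dots> \<le> e^2" using assms by linarith
  finally have "norm (u - s *\<^sub>R a) \<le> e" using assms(6) by (rule power2_le_imp_le)
  then show ?thesis by (intro exI[of _ s]) (auto simp: s_def)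
qed

lemma cross_vec:
  fixes u a v :: "real^'d::finite"
  assumes "norm u = 1" "norm a = 1" "norm v = 1" "\<bar>u \<bullet> a\<bar> \<ge> 1 - \<delta>" "2*\<delta> \<le> e^2" "0 \<le> e"
  shows "\<bar>v \<bullet> u\<bar> \<le> \<bar>v \<bullet> a\<bar> + e"
proof -
  obtain s where s: "s = 1 \<or> s = -1" "norm (u - s *\<^sub>R a) \<le> e" using close_vec[OF assms] by blast
  have "v \<bullet> u = s * (v \<bullet> a) + v \<bullet> (u - s *\<^sub>R a)" by (simp add: inner_diff_right)
  then have "\<bar>v \<bullet> u\<bar> \<le> \<bar>s * (v \<bullet> a)\<bar> + \<bar>v \<bullet> (u - s *\<^sub>R a)\<bar>" by linarith
  also have "\<bar>s * (v \<bullet> a)\<bar> = \<bar>v \<bullet> a\<bar>" using s(1) by (auto simp: abs_mult)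
  also have "\<bar>v \<bullet> (u - s *\<^sub>R a)\<bar> \<le> norm v * norm (u - s *\<^sub>R a)" by (rule Cauchy_Schwarz_ineq2)
  also have "\<dots> \<le> e" using s(2) assms(3) by simp
  finally show ?thesis by simp
qed

lemma same_vec:
  fixes u a v :: "real^'d::finite"
  assumes "norm u = 1" "norm a = 1" "norm v = 1" "\<bar>u \<bullet> a\<bar> \<ge> 1 - \<delta>" "\<bar>v \<bullet> a\<bar> \<ge> 1 - \<delta>" "2*\<delta> \<le> e^2" "0 \<le> e"
  shows "\<bar>u \<bullet> v\<bar> \<ge> 1 - 2*e^2"
proof -
  obtain s where s: "s = 1 \<or> s = -1" "norm (u - s *\<^sub>R a) \<le> e" using close_vec[OF assms(1,2,3,4,6,7)] by blast
  obtain t where t: "t = 1 \<or> t = -1" "norm (v - t *\<^sub>R a) \<le> e" using close_vec[OF assms(3,2,1,5,6,7)] by blast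
  have "norm (s *\<^sub>R u - t *\<^sub>R v) = norm (s *\<^sub>R (u - s *\<^sub>R a) - t *\<^sub>R (v - t *\<^sub>R a))"
    using s(1) t(1) by (auto simp: algebra_simps)
  also have "\<dots> \<le> norm (s *\<^sub>R (u - s *\<^sub>R a)) + norm (t *\<^sub>R (v - t *\<^sub>R a))" by (rule norm_triangle_ineq4)
  also have "\<dots> \<le> 2 * e" using s t by auto
  finally have n: "norm (s *\<^sub>R u - t *\<^sub>R v) \<le> 2*e" .
  have "(norm (s *\<^sub>R u - t *\<^sub>R v))^2 = s^2 * (u \<bullet> u) - 2 * (s * t) * (u \<bullet> v) + t^2 * (v \<bullet> v)"
    unfolding power2_norm_eq_inner by (simp add: inner_diff_left inner_diff_right inner_commute algebra_simps power2_eq_square)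
  also have "\<dots> = 2 - 2 * (s * t) * (u \<bullet> v)" using s(1) t(1) unit_inner_self[OF assms(1)] unit_inner_self[OF assms(3)] by auto
  finally have eq: "(norm (s *\<^sub>R u - t *\<^sub>R v))^2 = 2 - 2 * (s * t) * (u \<bullet> v)" .
  have "(norm (s *\<^sub>R u - t *\<^sub>R v))^2 \<le> (2*e)^2" by (rule power_mono[OF n norm_ge_zero])
  then have "(s * t) * (u \<bullet> v) \<ge> 1 - 2*e^2" using eq by (simp add: power2_eq_square algebra_simps)
  moreover have "(s * t) * (u \<bullet> v) \<le> \<bar>u \<bullet> v\<bar>" using s(1) t(1) by auto
  ultimately show ?thesis by linarith
qed

context
  fixes f :: "real \<Rightarrow> real"
  assumes st: "stable f"
begin

lemma AF_nonneg: "\<bar>A\<bar> \<le> 1 \<Longrightarrow> 0 \<le> A * f A"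
proof -
  assume "\<bar>A\<bar> \<le> 1"
  then have "A \<in> {-1..1}" by auto
  then have "sgn (f A) = sgn A" using st by (auto simp: stable_def)
  then show ?thesis
  proof (cases "A > 0")
    case True
    then have "f A > 0" using \<open>sgn (f A) = sgn A\<close> by (metis sgn_greater sgn_pos)
    then show ?thesis using True by simp
  next
    case False
    show ?thesis
    proof (cases "A = 0")
      case False
      then have "A < 0" using \<open>\<not> A > 0\<close> by simp
      then have "f A < 0" using \<open>sgn (f A) = sgn A\<close> by (metis sgn_less sgn_neg)
      then show ?thesis using \<open>A < 0\<close> by (simp add: mult_nonpos_nonpos)
    qed simp
  qed
qed

lemma bounded_f: "\<exists>M\<ge>0. \<forall>A. \<bar>A\<bar> \<le> 1 \<longrightarrow> \<bar>f A\<bar> \<le> M"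
proof -
  have c: "continuous_on {-1..1} (\<lambda>A. \<bar>f A\<bar>)"
    using st by (auto simp: stable_def intro: continuous_intros)
  obtain x where "x \<in> {-1..1::real}" "\<forall>y\<in>{-1..1}. \<bar>f y\<bar> \<le> \<bar>f x\<bar>"
    using continuous_attains_sup[OF compact_Icc _ c] by auto
  then show ?thesis by (intro exI[of _ "\<bar>f x\<bar>"]) (auto simp: abs_le_iff)
qed

lemma w_norm_ge1:
  fixes u v :: "real^'d::finite"
  assumes "norm u = 1" "norm v = 1"
  shows "norm (u + f (u \<bullet> v) *\<^sub>R v) \<ge> 1"
proof -
  have "0 \<le> (u \<bullet> v) * f (u \<bullet> v)" using AF_nonneg unit_inner_abs[OF assms] by blast
  then have "1^2 \<le> (norm (u + f (u \<bullet> v) *\<^sub>R v))^2"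
    using norm_w_sq[OF assms, of "f (u \<bullet> v)"] by (simp add: zero_le_power2 add_nonneg_nonneg)
  then show ?thesis by (rule power2_le_imp_le) simp
qed

lemma pull_unit:
  fixes u v :: "real^'d::finite"
  assumes "norm u = 1" "norm v = 1"
  shows "norm (pull f u v) = 1"
proof -
  have "u + f (u \<bullet> v) *\<^sub>R v \<noteq> 0" using w_norm_ge1[OF assms] by (metis norm_zero not_one_le_zero)
  then show ?thesis by (simp add: pull_def Let_def)
qed

lemma pull_inner_bound:
  fixes u v x :: "real^'d::finite"
  assumes "norm u = 1" "norm v = 1"
  shows "\<bar>pull f u v \<bullet> x\<bar> \<le> \<bar>u \<bullet> x\<bar> + \<bar>f (u \<bullet> v)\<bar> * \<bar>v \<bullet> x\<bar>"
proof -
  define w where "w = u + f (u \<bullet> v) *\<^sub>R v"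
  have n: "norm w \<ge> 1" using w_norm_ge1[OF assms] by (simp add: w_def)
  have "\<bar>pull f u v \<bullet> x\<bar> = \<bar>w \<bullet> x\<bar> / norm w" by (simp add: pull_def Let_def w_def[symmetric] abs_mult)
  also have "\<dots> \<le> \<bar>w \<bullet> x\<bar>" using n by (simp add: divide_le_eq mult_le_cancel_left1)
  also have "\<bar>w \<bullet> x\<bar> \<le> \<bar>u \<bullet> x\<bar> + \<bar>f (u \<bullet> v)\<bar> * \<bar>v \<bullet> x\<bar>"
    by (simp add: w_def inner_add_left abs_mult[symmetric] abs_triangle_ineq)
  finally show ?thesis .
qed

lemma pull_sq:
  fixes u v :: "real^'d::finite"
  assumes "norm u = 1" "norm v = 1"
  shows "(pull f u v \<bullet> v)^2 = (u \<bullet> v)^2 + (1 - (u \<bullet> v)^2) * (2*(u \<bullet> v)*f (u \<bullet> v) + (f (u \<bullet> v))^2) / (1 + 2*(u \<bullet> v)*f (u \<bullet> v) + (f (u \<bullet> v))^2)"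
proof -
  define A where "A = u \<bullet> v"
  define F where "F = f A"
  define w where "w = u + F *\<^sub>R v"
  have D: "(norm w)^2 = 1 + 2*A*F + F^2" using norm_w_sq[OF assms] by (simp add: w_def A_def)
  have D1: "1 + 2*A*F + F^2 \<ge> 1" using AF_nonneg[of A] unit_inner_abs[OF assms] by (simp add: A_def F_def)
  have wv: "w \<bullet> v = A + F" using unit_inner_self[OF assms(2)] by (simp add: w_def inner_add_left A_def)
  have "(pull f u v \<bullet> v)^2 = (w \<bullet> v)^2 / (norm w)^2"
    by (simp add: pull_def Let_def w_def F_def A_def power_divide)
  also have "\<dots> = (A + F)^2 / (1 + 2*A*F + F^2)" using D wv by simp
  also have "\<dots> = A^2 + (1 - A^2) * (2*A*F + F^2) / (1 + 2*A*F + F^2)"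
    using D1 by (simp add: field_simps power2_eq_square)
  finally show ?thesis by (simp add: A_def F_def)
qed

lemma pull_mono:
  fixes u v :: "real^'d::finite"
  assumes "norm u = 1" "norm v = 1"
  shows "(pull f u v \<bullet> v)^2 \<ge> (u \<bullet> v)^2"
proof -
  define A where "A = u \<bullet> v"
  have a: "\<bar>A\<bar> \<le> 1" using unit_inner_abs[OF assms] by (simp add: A_def)
  have "0 \<le> A * f A" using AF_nonneg a by simp
  moreover have "A^2 \<le> 1" using a by (simp add: abs_square_le_1)
  ultimately have "0 \<le> (1 - A^2) * (2*A*f A + (f A)^2) / (1 + 2*A*f A + (f A)^2)"
    by (intro divide_nonneg_nonneg mult_nonneg_nonneg) auto
  then show ?thesis using pull_sq[OF assms] by (simp add: A_def)
qed

lemma f_pos_bound: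
  assumes "0 < \<eta>" "\<eta> \<le> 1"
  shows "\<exists>m>0. \<forall>A. \<eta> \<le> \<bar>A\<bar> \<longrightarrow> \<bar>A\<bar> \<le> 1 \<longrightarrow> m \<le> A * f A"
proof -
  have c: "continuous_on {-1..1} f" using st by (simp add: stable_def)
  have sg: "\<And>A. A \<in> {-1..1} \<Longrightarrow> sgn (f A) = sgn A" using st by (simp add: stable_def)
  have c1: "continuous_on {\<eta>..1} f" by (rule continuous_on_subset[OF c]) (use assms in auto)
  obtain x1 where x1: "x1 \<in> {\<eta>..1}" "\<forall>y\<in>{\<eta>..1}. f x1 \<le> f y"
    using continuous_attains_inf[OF compact_Icc _ c1] assms by auto
  have c2: "continuous_on {-1..-\<eta>} (\<lambda>A. - f A)"
    by (rule continuous_on_minus, rule continuous_on_subset[OF c]) (use assms in auto)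
  obtain x2 where x2: "x2 \<in> {-1..-\<eta>}" "\<forall>y\<in>{-1..-\<eta>}. - f x2 \<le> - f y"
    using continuous_attains_inf[OF compact_Icc _ c2] assms by auto
  have p1: "f x1 > 0" using sg[of x1] x1(1) assms by (auto simp: sgn_if split: if_splits)
  have p2: "f x2 < 0" using sg[of x2] x2(1) assms by (auto simp: sgn_if split: if_splits)
  define m where "m = \<eta> * min (f x1) (- f x2)"
  have "m > 0" using p1 p2 assms by (simp add: m_def)
  moreover have "m \<le> A * f A" if "\<eta> \<le> \<bar>A\<bar>" "\<bar>A\<bar> \<le> 1" for A
  proof (cases "A \<ge> 0")
    case True
    then have "A \<in> {\<eta>..1}" using that by auto
    then have "f x1 \<le> f A" using x1 by auto
    then have "\<eta> * f x1 \<le> A * f A" using True that p1 by (intro mult_mono) auto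
    moreover have "\<eta> * min (f x1) (- f x2) \<le> \<eta> * f x1" using assms by (intro mult_left_mono) auto
    ultimately show ?thesis by (simp add: m_def)
  next
    case False
    then have "A \<in> {-1..-\<eta>}" using that by auto
    then have "- f x2 \<le> - f A" using x2 by auto
    then have "\<eta> * (- f x2) \<le> (-A) * (- f A)" using False that p2 by (intro mult_mono) auto
    moreover have "\<eta> * min (f x1) (- f x2) \<le> \<eta> * (- f x2)" using assms by (intro mult_left_mono) auto
    ultimately show ?thesis by (simp add: m_def)
  qed
  ultimately show ?thesis by blast
qed

lemma pull_gain:
  assumes "0 < \<delta>" "\<delta> \<le> 1" "0 < \<eta>" "\<eta> \<le> 1"
  shows "\<exists>c>0. \<forall>u v :: real^'d::finite. norm u = 1 \<longrightarrow> norm v = 1 \<longrightarrow> \<eta> \<le> \<bar>u \<bullet> v\<bar> \<longrightarrow> \<bar>u \<bullet> v\<bar> \<le> 1 - \<delta>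
            \<longrightarrow> (pull f u v \<bullet> v)^2 \<ge> (u \<bullet> v)^2 + c"
proof -
  obtain m where m: "m > 0" "\<And>A. \<eta> \<le> \<bar>A\<bar> \<Longrightarrow> \<bar>A\<bar> \<le> 1 \<Longrightarrow> m \<le> A * f A"
    using f_pos_bound[OF assms(3,4)] by blast
  obtain M where M: "M \<ge> 0" "\<And>A. \<bar>A\<bar> \<le> 1 \<Longrightarrow> \<bar>f A\<bar> \<le> M"
    using bounded_f by blast
  define c where "c = \<delta> * (2*m) / (1+M)^2"
  have "c > 0" using assms m M by (simp add: c_def)
  moreover have "(pull f u v \<bullet> v)^2 \<ge> (u \<bullet> v)^2 + c"
    if u: "norm u = 1" "norm v = 1" "\<eta> \<le> \<bar>u \<bullet> v\<bar>" "\<bar>u \<bullet> v\<bar> \<le> 1 - \<delta>" for u v :: "real^'d"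
  proof -
    define A where "A = u \<bullet> v"
    define F where "F = f A"
    have a1: "\<bar>A\<bar> \<le> 1" using unit_inner_abs[OF u(1,2)] by (simp add: A_def)
    have AF: "m \<le> A * F" using m(2)[of A] u(3) a1 by (simp add: A_def F_def)
    have FM: "\<bar>F\<bar> \<le> M" using M(2) a1 by (simp add: F_def)
    have "A^2 \<le> (1-\<delta>)^2" using u(4) assms by (simp add: abs_le_square_iff[symmetric] A_def)
    also have "\<dots> \<le> 1 - \<delta>" using assms by (simp add: power2_eq_square algebra_simps mult_le_cancel_left1)
    finally have h1: "\<delta> \<le> 1 - A^2" by simp
    have h2: "2*m \<le> 2*A*F + F^2" using AF by (simp add: zero_le_power2 add_increasing2)
    have "A * F \<le> \<bar>A\<bar> * \<bar>F\<bar>" by (metis abs_ge_self abs_mult)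
    also have "\<dots> \<le> 1 * M" using a1 FM by (intro mult_mono) auto
    finally have aM: "A * F \<le> M" by simp
    have "F^2 \<le> M^2" using FM by (simp add: abs_le_square_iff[symmetric] M(1))
    then have h3: "1 + 2*A*F + F^2 \<le> (1+M)^2" using aM by (simp add: power2_eq_square algebra_simps)
    have h4: "0 < 1 + 2*A*F + F^2" using AF m(1) zero_le_power2[of F] by linarith
    have "\<delta> * (2*m) \<le> (1 - A^2) * (2*A*F + F^2)" using h1 h2 assms m by (intro mult_mono) auto
    moreover have "0 < \<delta> * (2*m)" using assms m by simp
    ultimately have "0 \<le> (1 - A^2) * (2*A*F + F^2)" "\<delta> * (2*m) \<le> (1 - A^2) * (2*A*F + F^2)" by linarith+
    then have "c \<le> (1 - A^2) * (2*A*F + F^2) / (1 + 2*A*F + F^2)"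
      unfolding c_def using h3 h4 assms m by (intro frac_le) auto
    then show ?thesis using pull_sq[OF u(1,2)] by (simp add: A_def F_def)
  qed
  ultimately show ?thesis by blast
qed

definition pullN :: "(real \<Rightarrow> real) \<Rightarrow> nat \<Rightarrow> real ^ 'd::finite \<Rightarrow> real ^ 'd \<Rightarrow> real ^ 'd" where
  "pullN g n u v = ((\<lambda>y. pull g y v) ^^ n) u"

lemma pullN_unit:
  fixes u v :: "real^'d::finite"
  assumes "norm u = 1" "norm v = 1"
  shows "norm (pullN f n u v) = 1"
  by (induction n) (use assms pull_unit in \<open>auto simp: pullN_def\<close>)

lemma pullN_progress:
  fixes u v :: "real^'d::finite"
  assumes u: "norm u = 1" "norm v = 1" "\<eta> \<le> \<bar>u \<bullet> v\<bar>" and d: "0 < \<delta>" "\<delta> \<le> 1"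
    and c: "\<And>u :: real^'d. norm u = 1 \<Longrightarrow> \<eta> \<le> \<bar>u \<bullet> v\<bar> \<Longrightarrow> \<bar>u \<bullet> v\<bar> \<le> 1 - \<delta> \<Longrightarrow> (pull f u v \<bullet> v)^2 \<ge> (u \<bullet> v)^2 + c"
  shows "(pullN f n u v \<bullet> v)^2 \<ge> (u \<bullet> v)^2 \<and> (pullN f n u v \<bullet> v)^2 \<ge> min ((1-\<delta>)^2) ((u \<bullet> v)^2 + n * c)"
proof (induction n)
  case 0
  then show ?case by (simp add: pullN_def)
next
  case (Suc n)
  define y where "y = pullN f n u v"
  have yu: "norm y = 1" using pullN_unit[OF u(1,2)] by (simp add: y_def)
  have e: "pullN f (Suc n) u v = pull f y v" by (simp add: pullN_def y_def)
  have mono: "(pull f y v \<bullet> v)^2 \<ge> (y \<bullet> v)^2" using pull_mono[OF yu u(2)] .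
  show ?case
  proof (cases "(y \<bullet> v)^2 \<ge> (1-\<delta>)^2")
    case True
    then show ?thesis using Suc mono unfolding e y_def[symmetric] by linarith
  next
    case False
    then have "\<bar>y \<bullet> v\<bar> \<le> \<bar>1 - \<delta>\<bar>" using abs_le_square_iff[of "y \<bullet> v" "1 - \<delta>"] by simp
    then have lt: "\<bar>y \<bullet> v\<bar> \<le> 1 - \<delta>" using d by simp
    have "\<bar>u \<bullet> v\<bar> \<le> \<bar>y \<bullet> v\<bar>" using Suc by (simp add: abs_le_square_iff y_def)
    then have "\<eta> \<le> \<bar>y \<bullet> v\<bar>" using u(3) by linarith
    then have g: "(pull f y v \<bullet> v)^2 \<ge> (y \<bullet> v)^2 + c" using c[OF yu _ lt] by blast
    have "(y \<bullet> v)^2 \<ge> (u \<bullet> v)^2 + n * c" using Suc False unfolding y_def by (simp add: min_def split: if_splits)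
    then show ?thesis using g mono Suc unfolding e y_def[symmetric] by (simp add: algebra_simps)
  qed
qed

lemma pull_iter:
  assumes "0 < \<delta>" "\<delta> \<le> 1" "0 < \<eta>" "\<eta> \<le> 1"
  shows "\<exists>N. \<forall>u v :: real^'d::finite. norm u = 1 \<longrightarrow> norm v = 1 \<longrightarrow> \<eta> \<le> \<bar>u \<bullet> v\<bar> \<longrightarrow> \<bar>pullN f N u v \<bullet> v\<bar> \<ge> 1 - \<delta>"
proof -
  obtain c where c: "c > 0" "\<And>u v :: real^'d. norm u = 1 \<Longrightarrow> norm v = 1 \<Longrightarrow> \<eta> \<le> \<bar>u \<bullet> v\<bar> \<Longrightarrow> \<bar>u \<bullet> v\<bar> \<le> 1 - \<delta>
            \<Longrightarrow> (pull f u v \<bullet> v)^2 \<ge> (u \<bullet> v)^2 + c"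
    using pull_gain[OF assms] by blast
  obtain N :: nat where N: "1 / c \<le> N" using real_arch_simple by blast
  have "N * c \<ge> 1" using N c(1) by (simp add: field_simps)
  have "\<bar>pullN f N u v \<bullet> v\<bar> \<ge> 1 - \<delta>"
    if u: "norm u = 1" "norm v = 1" "\<eta> \<le> \<bar>u \<bullet> v\<bar>" for u v :: "real^'d"
  proof -
    have p: "(pullN f N u v \<bullet> v)^2 \<ge> min ((1-\<delta>)^2) ((u \<bullet> v)^2 + N * c)"
      using pullN_progress[OF u assms(1,2), of c] c(2)[OF _ u(2)] by blast
    have "(1-\<delta>)^2 \<le> 1" using assms by (simp add: abs_square_le_1)
    also have "1 \<le> (u \<bullet> v)^2 + N * c" using \<open>N * c \<ge> 1\<close> by (simp add: add_increasing)
    finally have "(pullN f N u v \<bullet> v)^2 \<ge> (1-\<delta>)^2" using p by (simp add: min_def split: if_splits)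
    then have "\<bar>1-\<delta>\<bar> \<le> \<bar>pullN f N u v \<bullet> v\<bar>" using abs_le_square_iff by blast
    then show ?thesis using assms by simp
  qed
  then show ?thesis by blast
qed

lemma apply_Nil: "apply_interventions g [] U = U"
  by (simp add: apply_interventions_def)

lemma apply_Cons: "apply_interventions g (p # ps) U = apply_interventions g ps (intervene g p U)"
  by (simp add: apply_interventions_def)

lemma apply_append: "apply_interventions g (ps @ qs) U = apply_interventions g qs (apply_interventions g ps U)"
  by (simp add: apply_interventions_def)

lemma apply_config:
  fixes U :: "'n \<Rightarrow> real^'d::finite"
  shows "is_config U \<Longrightarrow> is_config (apply_interventions f ps U)"
proof (induction ps arbitrary: U)
  case Nil then show ?case by (simp add: apply_Nil)
next
  case (Cons p ps)
  obtain i j where p: "p = (i, j)" by fastforce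
  have "is_config (intervene f p U)"
    using Cons.prems pull_unit by (auto simp: is_config_def p intervene_eq)
  then show ?case using Cons.IH by (simp add: apply_Cons)
qed

lemma apply_bound:
  fixes U :: "'n \<Rightarrow> real^'d::finite"
  assumes M: "M \<ge> 0" "\<And>A. \<bar>A\<bar> \<le> 1 \<Longrightarrow> \<bar>f A\<bar> \<le> M"
  shows "is_config U \<Longrightarrow> (\<forall>(i,j)\<in>set ps. i \<in> R \<and> j \<in> R) \<Longrightarrow> 0 \<le> \<tau> \<Longrightarrow> (\<forall>r\<in>R. \<bar>U r \<bullet> x\<bar> \<le> \<tau>)
     \<Longrightarrow> (\<forall>r\<in>R. \<bar>apply_interventions f ps U r \<bullet> x\<bar> \<le> \<tau> * (1+M)^length ps)"
proof (induction ps arbitrary: U \<tau>)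
  case Nil then show ?case by (simp add: apply_Nil)
next
  case (Cons p ps)
  obtain i j where p: "p = (i, j)" by fastforce
  have ij: "i \<in> R" "j \<in> R" using Cons.prems(2) p by auto
  define U' where "U' = intervene f p U"
  have c': "is_config U'" using apply_config[OF Cons.prems(1), of "[p]"] by (simp add: apply_Cons apply_Nil U'_def)
  have "\<bar>U' r \<bullet> x\<bar> \<le> \<tau> * (1+M)" if r: "r \<in> R" for r
  proof (cases "r = i")
    case True
    have u: "norm (U i) = 1" "norm (U j) = 1" using Cons.prems(1) by (auto simp: is_config_def)
    have "\<bar>U' r \<bullet> x\<bar> \<le> \<bar>U i \<bullet> x\<bar> + \<bar>f (U i \<bullet> U j)\<bar> * \<bar>U j \<bullet> x\<bar>"
      using pull_inner_bound[OF u, of x] True by (simp add: U'_def p intervene_eq)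
    also have "\<dots> \<le> \<tau> + M * \<tau>"
      using Cons.prems(4) ij M unit_inner_abs[OF u] by (intro add_mono mult_mono) auto
    finally show ?thesis by (simp add: algebra_simps)
  next
    case False
    then have "U' r = U r" by (simp add: U'_def p intervene_eq)
    moreover have "\<tau> * 1 \<le> \<tau> * (1+M)" using Cons.prems(3) M(1) by (intro mult_left_mono) auto
    moreover have "\<bar>U r \<bullet> x\<bar> \<le> \<tau>" using Cons.prems(4) r by blast
    ultimately show ?thesis by simp
  qed
  then have b': "\<forall>r\<in>R. \<bar>U' r \<bullet> x\<bar> \<le> \<tau> * (1+M)" by blast
  have ps': "\<forall>(i,j)\<in>set ps. i \<in> R \<and> j \<in> R" using Cons.prems(2) by simp
  have t': "0 \<le> \<tau> * (1+M)" using Cons.prems(3) M(1) by simp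
  have "\<forall>r\<in>R. \<bar>apply_interventions f ps U' r \<bullet> x\<bar> \<le> (\<tau> * (1+M)) * (1+M)^length ps"
    by (rule Cons.IH[OF c' ps' t' b'])
  moreover have "apply_interventions f (p # ps) U = apply_interventions f ps U'" by (simp add: apply_Cons U'_def)
  moreover have "(\<tau> * (1+M)) * (1+M)^length ps = \<tau> * (1+M)^length (p # ps)" by simp
  ultimately show ?case by metis
qed

lemma apply_off:
  "(\<forall>(i,j)\<in>set ps. i \<in> R) \<Longrightarrow> r \<notin> R \<Longrightarrow> apply_interventions g ps U r = U r"
proof (induction ps arbitrary: U)
  case Nil then show ?case by (simp add: apply_Nil)
next
  case (Cons p ps)
  obtain i j where p: "p = (i, j)" by fastforce
  have "i \<noteq> r" using Cons.prems p by auto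
  then show ?case using Cons by (simp add: apply_Cons p intervene_def Let_def)
qed

lemma apply_block:
  fixes U :: "'n \<Rightarrow> real^'d::finite"
  assumes "j \<noteq> b"
  shows "apply_interventions g (replicate N (j, b)) U = U(j := pullN g N (U j) (U b))"
  using assms
proof (induction N arbitrary: U)
  case 0 then show ?case by (simp add: apply_Nil pullN_def)
next
  case (Suc N)
  have "apply_interventions g (replicate (Suc N) (j, b)) U
      = apply_interventions g (replicate N (j, b)) (U(j := pull g (U j) (U b)))"
    by (simp add: apply_Cons intervene_eq)
  also have "\<dots> = (U(j := pull g (U j) (U b)))(j := pullN g N ((U(j := pull g (U j) (U b))) j) ((U(j := pull g (U j) (U b))) b))"
    by (rule Suc.IH[OF Suc.prems])
  also have "\<dots> = U(j := pullN g N (pull g (U j) (U b)) (U b))" using Suc.prems by simp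
  also have "pullN g N (pull g (U j) (U b)) (U b) = pullN g (Suc N) (U j) (U b)"
    by (simp add: pullN_def funpow_Suc_right del: funpow.simps)
  finally show ?case .
qed

lemma apply_phase1:
  fixes U :: "'n \<Rightarrow> real^'d::finite"
  assumes "distinct xs" "b \<notin> set xs"
  shows "apply_interventions g (concat (map (\<lambda>j. replicate N (j, b)) xs)) U
       = (\<lambda>r. if r \<in> set xs then pullN g N (U r) (U b) else U r)"
  using assms
proof (induction xs arbitrary: U)
  case Nil then show ?case by (simp add: apply_Nil)
next
  case (Cons x xs)
  have xb: "x \<noteq> b" using Cons.prems by auto
  define U' where "U' = U(x := pullN g N (U x) (U b))"
  have "apply_interventions g (concat (map (\<lambda>j. replicate N (j, b)) (x # xs))) U
     = apply_interventions g (concat (map (\<lambda>j. replicate N (j, b)) xs)) U'"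
    by (simp add: apply_append apply_block[OF xb] U'_def)
  also have "\<dots> = (\<lambda>r. if r \<in> set xs then pullN g N (U' r) (U' b) else U' r)"
    using Cons by simp
  also have "\<dots> = (\<lambda>r. if r \<in> set (x # xs) then pullN g N (U r) (U b) else U r)"
    using Cons.prems xb by (auto simp: U'_def fun_eq_iff)
  finally show ?case .
qed

lemma length_phase1: "length (concat (map (\<lambda>j. replicate N (j, b)) xs)) = N * length xs"
  by (induction xs) auto

lemma main_ind:
  assumes eps: "0 < \<epsilon>" "\<epsilon> < 1/4"
  shows "\<exists>L::nat. \<forall>(R::'n::finite set) (U::'n \<Rightarrow> real^'d::finite). card R \<le> k \<longrightarrow> is_config U \<longrightarrow>
    (\<exists>ps. length ps \<le> L \<and> (\<forall>(i,j)\<in>set ps. i \<noteq> j \<and> i \<in> R \<and> j \<in> R) \<and>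
      (\<forall>i\<in>R. \<forall>j\<in>R. \<bar>apply_interventions f ps U i \<bullet> apply_interventions f ps U j\<bar> \<le> \<epsilon>
                   \<or> \<bar>apply_interventions f ps U i \<bullet> apply_interventions f ps U j\<bar> \<ge> 1 - \<epsilon>))"
proof (induction k)
  case 0
  show ?case
  proof (intro exI[of _ 0] allI impI)
    fix R :: "'n set" and U :: "'n \<Rightarrow> real^'d"
    assume "card R \<le> 0"
    then have "R = {}" by (simp add: card_eq_0_iff)
    then show "\<exists>ps. length ps \<le> 0 \<and> (\<forall>(i,j)\<in>set ps. i \<noteq> j \<and> i \<in> R \<and> j \<in> R) \<and>
      (\<forall>i\<in>R. \<forall>j\<in>R. \<bar>apply_interventions f ps U i \<bullet> apply_interventions f ps U j\<bar> \<le> \<epsilon>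
                   \<or> \<bar>apply_interventions f ps U i \<bullet> apply_interventions f ps U j\<bar> \<ge> 1 - \<epsilon>)"
      by (intro exI[of _ "[]"]) auto
  qed
next
  case (Suc k)
  obtain L' where IH: "\<And>(R::'n set) (U::'n \<Rightarrow> real^'d). card R \<le> k \<Longrightarrow> is_config U \<Longrightarrow>
    (\<exists>ps. length ps \<le> L' \<and> (\<forall>(i,j)\<in>set ps. i \<noteq> j \<and> i \<in> R \<and> j \<in> R) \<and>
      (\<forall>i\<in>R. \<forall>j\<in>R. \<bar>apply_interventions f ps U i \<bullet> apply_interventions f ps U j\<bar> \<le> \<epsilon>
                   \<or> \<bar>apply_interventions f ps U i \<bullet> apply_interventions f ps U j\<bar> \<ge> 1 - \<epsilon>))"
    using Suc.IH by blast
  obtain M where M: "M \<ge> 0" "\<And>A. \<bar>A\<bar> \<le> 1 \<Longrightarrow> \<bar>f A\<bar> \<le> M" using bounded_f by blast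
  define e where "e = \<epsilon> / 4"
  define \<delta> where "\<delta> = e^2 / 2"
  define \<eta> where "\<eta> = \<epsilon> / (2 * (1+M)^L')"
  have e0: "0 \<le> e" using eps by (simp add: e_def)
  have ee: "\<epsilon> * \<epsilon> \<le> \<epsilon> * 1" using eps by (intro mult_left_mono) auto
  have dd: "\<delta> = \<epsilon> * \<epsilon> / 32" by (simp add: \<delta>_def e_def power2_eq_square)
  have d0: "0 < \<delta>" "\<delta> \<le> 1" unfolding dd using eps ee
    by (simp, linarith)
  have de: "2 * \<delta> \<le> e^2" by (simp add: \<delta>_def)
  have pM: "(1+M)^L' \<ge> 1" using M(1) by simp
  have n0: "0 < \<eta>" "\<eta> \<le> 1" using eps pM by (simp_all add: \<eta>_def field_simps)
  have etaM: "\<eta> * (1+M)^L' = \<epsilon> / 2" using pM M(1) by (simp add: \<eta>_def)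
  obtain N where N: "\<And>u v :: real^'d. norm u = 1 \<Longrightarrow> norm v = 1 \<Longrightarrow> \<eta> \<le> \<bar>u \<bullet> v\<bar> \<Longrightarrow> \<bar>pullN f N u v \<bullet> v\<bar> \<ge> 1 - \<delta>"
    using pull_iter[OF d0 n0] by blast
  show ?case
  proof (intro exI[of _ "N * Suc k + L'"] allI impI)
    fix R :: "'n set" and U :: "'n \<Rightarrow> real^'d"
    assume cR: "card R \<le> Suc k" and cU: "is_config U"
    have uU: "\<And>r. norm (U r) = 1" using cU by (simp add: is_config_def)
    show "\<exists>ps. length ps \<le> N * Suc k + L' \<and> (\<forall>(i,j)\<in>set ps. i \<noteq> j \<and> i \<in> R \<and> j \<in> R) \<and>
      (\<forall>i\<in>R. \<forall>j\<in>R. \<bar>apply_interventions f ps U i \<bullet> apply_interventions f ps U j\<bar> \<le> \<epsilon>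
                   \<or> \<bar>apply_interventions f ps U i \<bullet> apply_interventions f ps U j\<bar> \<ge> 1 - \<epsilon>)"
    proof (cases "R = {}")
      case True
      then show ?thesis by (intro exI[of _ "[]"]) auto
    next
      case False
      then obtain b where bR: "b \<in> R" by blast
      define S where "S = {r\<in>R. r \<noteq> b \<and> \<eta> \<le> \<bar>U r \<bullet> U b\<bar>}"
      define T where "T = {r\<in>R. r \<noteq> b \<and> \<bar>U r \<bullet> U b\<bar> < \<eta>}"
      obtain xs where xs: "set xs = S" "distinct xs" using finite_distinct_list[of S] by auto
      define ps1 where "ps1 = concat (map (\<lambda>j. replicate N (j, b)) xs)"
      define V where "V = apply_interventions f ps1 U"
      have bS: "b \<notin> set xs" using xs by (simp add: S_def)
      have Veq: "V = (\<lambda>r. if r \<in> S then pullN f N (U r) (U b) else U r)"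
        using apply_phase1[OF xs(2) bS] xs(1) by (simp add: V_def ps1_def)
      have cV: "is_config V" unfolding V_def by (rule apply_config[OF cU])
      have uV: "\<And>r. norm (V r) = 1" using cV by (simp add: is_config_def)
      have len1: "length ps1 \<le> N * Suc k"
      proof -
        have "length xs = card S" using xs distinct_card by fastforce
        also have "card S \<le> card R" by (rule card_mono) (auto simp: S_def)
        finally have "length xs \<le> Suc k" using cR by linarith
        then have "N * length xs \<le> N * Suc k" by (rule mult_le_mono2)
        then show ?thesis by (simp add: ps1_def length_phase1)
      qed
      have pairs1: "\<forall>(i,j)\<in>set ps1. i \<noteq> j \<and> i \<in> R \<and> j \<in> R"
        using xs bR by (auto simp: ps1_def S_def)
      have "card T \<le> card (R - {b})" by (rule card_mono) (auto simp: T_def)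
      then have cT: "card T \<le> k" using cR bR by simp
      obtain ps2 where ps2: "length ps2 \<le> L'" "\<forall>(i,j)\<in>set ps2. i \<noteq> j \<and> i \<in> T \<and> j \<in> T"
        "\<forall>i\<in>T. \<forall>j\<in>T. \<bar>apply_interventions f ps2 V i \<bullet> apply_interventions f ps2 V j\<bar> \<le> \<epsilon>
                   \<or> \<bar>apply_interventions f ps2 V i \<bullet> apply_interventions f ps2 V j\<bar> \<ge> 1 - \<epsilon>"
        using IH[OF cT cV] by blast
      define W where "W = apply_interventions f ps2 V"
      have WU: "apply_interventions f (ps1 @ ps2) U = W" by (simp add: apply_append W_def V_def)
      have cW: "is_config W" unfolding W_def by (rule apply_config[OF cV])
      have uW: "\<And>r. norm (W r) = 1" using cW by (simp add: is_config_def)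
      have WV: "W c = V c" if "c \<notin> T" for c
        unfolding W_def by (rule apply_off[of ps2 T]) (use ps2(2) that in auto)
      have clus: "\<bar>V c \<bullet> U b\<bar> \<ge> 1 - \<delta>" if "c \<in> R" "c \<notin> T" for c
      proof (cases "c = b")
        case True
        then have "V c = U b" using Veq by (simp add: S_def)
        then show ?thesis using unit_inner_self[OF uU[of b]] d0 by simp
      next
        case False
        then have "c \<in> S" using that by (auto simp: S_def T_def)
        then show ?thesis using N[OF uU uU, of c b] Veq by (simp add: S_def)
      qed
      have Tb: "\<bar>W t \<bullet> U b\<bar> \<le> \<epsilon> / 2" if "t \<in> T" for t
      proof -
        have h: "\<forall>r\<in>T. \<bar>V r \<bullet> U b\<bar> \<le> \<eta>" using Veq by (auto simp: T_def S_def)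
        have "\<bar>W t \<bullet> U b\<bar> \<le> \<eta> * (1+M)^length ps2"
          using apply_bound[OF M cV _ _ h, of ps2] ps2(2) n0 that unfolding W_def by fastforce
        also have "\<dots> \<le> \<eta> * (1+M)^L'" using ps2(1) M(1) n0 by (intro mult_left_mono power_increasing) auto
        finally show ?thesis using etaM by simp
      qed
      have cross: "\<bar>W t \<bullet> W c\<bar> \<le> \<epsilon>" if "t \<in> T" "c \<in> R" "c \<notin> T" for t c
      proof -
        have "\<bar>W t \<bullet> V c\<bar> \<le> \<bar>W t \<bullet> U b\<bar> + e"
          by (rule cross_vec[OF uV uU uW clus[OF that(2,3)] de e0])
        then show ?thesis using Tb[OF that(1)] WV[OF that(3)] by (simp add: e_def)
      qed
      have same: "\<bar>W c \<bullet> W c'\<bar> \<ge> 1 - \<epsilon>" if "c \<in> R" "c \<notin> T" "c' \<in> R" "c' \<notin> T" for c c'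
      proof -
        have "\<bar>V c \<bullet> V c'\<bar> \<ge> 1 - 2*e^2"
          by (rule same_vec[OF uV uU uV clus[OF that(1,2)] clus[OF that(3,4)] de e0])
        moreover have "2*e^2 \<le> \<epsilon>"
        proof -
          have "\<epsilon> * \<epsilon> \<le> \<epsilon> * 1" using eps by (intro mult_left_mono) auto
          moreover have "2*e^2 = \<epsilon> * \<epsilon> / 8" by (simp add: e_def power2_eq_square)
          ultimately show ?thesis using eps by linarith
        qed
        ultimately show ?thesis using WV that by simp
      qed
      have TR: "T \<subseteq> R" by (auto simp: T_def)
      show ?thesis
      proof (intro exI[of _ "ps1 @ ps2"] conjI)
        show "length (ps1 @ ps2) \<le> N * Suc k + L'" using len1 ps2(1) by simp
        show "\<forall>(i,j)\<in>set (ps1 @ ps2). i \<noteq> j \<and> i \<in> R \<and> j \<in> R" using pairs1 ps2(2) TR by auto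
        show "\<forall>i\<in>R. \<forall>j\<in>R. \<bar>apply_interventions f (ps1 @ ps2) U i \<bullet> apply_interventions f (ps1 @ ps2) U j\<bar> \<le> \<epsilon>
                   \<or> \<bar>apply_interventions f (ps1 @ ps2) U i \<bullet> apply_interventions f (ps1 @ ps2) U j\<bar> \<ge> 1 - \<epsilon>"
          unfolding WU
        proof (intro ballI)
          fix i j assume ij: "i \<in> R" "j \<in> R"
          show "\<bar>W i \<bullet> W j\<bar> \<le> \<epsilon> \<or> \<bar>W i \<bullet> W j\<bar> \<ge> 1 - \<epsilon>"
          proof (cases "i \<in> T"; cases "j \<in> T")
            assume "i \<in> T" "j \<in> T" then show ?thesis using ps2(3) by (simp add: W_def)
          next
            assume "i \<in> T" "j \<notin> T" then show ?thesis using cross ij by blast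
          next
            assume "i \<notin> T" "j \<in> T" then show ?thesis using cross[of j i] ij by (simp add: inner_commute)
          next
            assume "i \<notin> T" "j \<notin> T" then show ?thesis using same ij by blast
          qed
        qed
      qed
    qed
  qed
qed

end

theorem mainTheorem9:
  fixes f :: "real \<Rightarrow> real" and \<epsilon> :: real
  assumes "CARD('d::finite) \<ge> 2" and "CARD('n::finite) \<ge> 2"
    and "0 < \<epsilon>" and "\<epsilon> < 1/4"
    and "stable f"
  shows "\<exists>K::nat. K > 0 \<and>
           (\<forall>U :: 'n \<Rightarrow> real ^ 'd. is_config U \<and> eps_active \<epsilon> U \<longrightarrow>
              (\<exists>ps. length ps \<le> K \<and> (\<forall>(i, j) \<in> set ps. i \<noteq> j) \<and>
                    \<not> eps_active \<epsilon> (apply_interventions f ps U)))"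
proof -
  obtain L where L: "\<And>(R::'n set) (U::'n \<Rightarrow> real^'d). card R \<le> CARD('n) \<Longrightarrow> is_config U \<Longrightarrow>
    (\<exists>ps. length ps \<le> L \<and> (\<forall>(i,j)\<in>set ps. i \<noteq> j \<and> i \<in> R \<and> j \<in> R) \<and>
      (\<forall>i\<in>R. \<forall>j\<in>R. \<bar>apply_interventions f ps U i \<bullet> apply_interventions f ps U j\<bar> \<le> \<epsilon>
                   \<or> \<bar>apply_interventions f ps U i \<bullet> apply_interventions f ps U j\<bar> \<ge> 1 - \<epsilon>))"
    using main_ind[OF assms(5) assms(3,4), where k = "CARD('n)"] by blast
  show ?thesis
  proof (intro exI[of _ "Suc L"] conjI allI impI)
    fix U :: "'n \<Rightarrow> real^'d"
    assume "is_config U \<and> eps_active \<epsilon> U"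
    then obtain ps where ps: "length ps \<le> L" "\<forall>(i,j)\<in>set ps. i \<noteq> j \<and> i \<in> UNIV \<and> j \<in> UNIV"
      "\<forall>i\<in>UNIV. \<forall>j\<in>UNIV. \<bar>apply_interventions f ps U i \<bullet> apply_interventions f ps U j\<bar> \<le> \<epsilon>
                   \<or> \<bar>apply_interventions f ps U i \<bullet> apply_interventions f ps U j\<bar> \<ge> 1 - \<epsilon>"
      using L[of UNIV U] by auto
    show "\<exists>ps. length ps \<le> Suc L \<and> (\<forall>(i, j) \<in> set ps. i \<noteq> j) \<and> \<not> eps_active \<epsilon> (apply_interventions f ps U)"
    proof (intro exI[of _ ps] conjI)
      show "length ps \<le> Suc L" using ps(1) by simp
      show "\<forall>(i, j) \<in> set ps. i \<noteq> j" using ps(2) by auto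
      show "\<not> eps_active \<epsilon> (apply_interventions f ps U)"
        unfolding eps_active_def
      proof
        assume "\<exists>i j. \<epsilon> < \<bar>apply_interventions f ps U i \<bullet> apply_interventions f ps U j\<bar> \<and>
            \<bar>apply_interventions f ps U i \<bullet> apply_interventions f ps U j\<bar> < 1 - \<epsilon>"
        then obtain i j where ij: "\<epsilon> < \<bar>apply_interventions f ps U i \<bullet> apply_interventions f ps U j\<bar>"
            "\<bar>apply_interventions f ps U i \<bullet> apply_interventions f ps U j\<bar> < 1 - \<epsilon>" by blast
        moreover have "\<bar>apply_interventions f ps U i \<bullet> apply_interventions f ps U j\<bar> \<le> \<epsilon>
                   \<or> \<bar>apply_interventions f ps U i \<bullet> apply_interventions f ps U j\<bar> \<ge> 1 - \<epsilon>"
          using ps(3) by blast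
        ultimately show False by linarith
      qed
    qed
  qed simp
qed

end
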